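(* For every $m\ge1$, $\theta_m=\mathrm{tr}_{1,\dots,m}\,\overline{\mathcal M}_m$, where $$\overline{\mathcal M}_m=(\mathcal L_m)^{\rightarrow}\big(\mathcal T_{m-1\,m}+P_{m-1\,m}(\mathcal L_{m-1})^{\rightarrow}\big)\cdots\big(\mathcal T_{12}+P_{12}(\mathcal L_1)^{\rightarrow}\big)\,1,$$ the operators being applied consecutively from right to left with $(\mathcal T_{a\,a+1}+P_{a\,a+1}(\mathcal L_a)^{\rightarrow})X:=\mathcal T_{a\,a+1}X+P_{a\,a+1}X\mathcal L_a$ and $(\mathcal L_m)^{\rightarrow}X:=X\mathcal L_m$, and the trace taken over all $m$ copies of $\mathrm{End}\,\mathbb C^N$.
   Context: $E_{ij}$ is the standard basis of $\mathfrak{gl}_N$, $e_{ij}$ matrix units; $E_{ij}[r]=E_{ij}t^r$ in the loop algebra; $\widehat{\mathfrak g}^{+}=\mathfrak b^+\oplus t^{-1}\mathfrak{gl}_N[t^{-1}]$ with $\mathfrak b^+$ spanned by $E_{ij}$, $i\le j$; $\mathrm{sgn}(0)=0$. $\mathcal L^+(u)=\sum_{i,j}e_{ij}\otimes\mathcal L^+_{ij}(u)$, $\mathcal L^+_{ij}(u)=\sum_{n\ge0}\mathcal L^+_{ij}[-n]u^n$, $\mathcal L^+_{ij}[-n]=-2E_{ij}[-n]$ ($n\ge1$), $\mathcal L^+_{ij}[0]=-(1+\mathrm{sgn}(j-i))E_{ij}$. In $\mathrm U(\widehat{\mathfrak g}^{+})[[u,\partial_u]]$, $\partial_u$ commutes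 with $\mathrm U(\widehat{\mathfrak g}^{+})$ and $\partial_ug(u)=g(u)\partial_u+g'(u)$. $\mathcal L=2u\partial_u\cdot I-\mathcal L^+(u)$. $P=\sum_{i,j}e_{ij}\otimes e_{ji}$, $\mathcal T=\sum_{i,j}\mathrm{sgn}(j-i)e_{ij}\otimes e_{ji}$; subscripts denote tensor copies of $\mathrm{End}\,\mathbb C^N$. $T(y)=\sum_i e_{ii}\otimes e_{ii}+\frac1{1-y}\sum_{i<j}e_{ij}\otimes e_{ji}+\frac1{1+y}\sum_{i>j}e_{ij}\otimes e_{ji}$ as a power series in $y$, and $\theta_m$ is defined by $\sum_{m\ge1}\theta_my^m=\sum_{s\ge1}y^s\,\mathrm{tr}_{1,\dots,s}T_{s-1\,s}(y)\cdots T_{12}(y)\mathcal L_1\cdots\mathcal L_s$. *)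

theory Defs
  imports Complex_Main "HOL-Computational_Algebra.Formal_Power_Series"
begin

(* Elements of  End(C^N)^{\<otimes> m} \<otimes> A  (A an associative unital ring) are represented by
   their matrix entries X I J, where I = [i_1,...,i_m], J = [j_1,...,j_m] are multi-indices
   with entries in {0..<N}; X = sum over I J of e_{i_1 j_1} \<otimes> ... \<otimes> e_{i_m j_m} \<otimes> X I J.
   Tensor copies are numbered 1..m (copy a is list position a-1). *)

type_synonym 'a tmat = "nat list \<Rightarrow> nat list \<Rightarrow> 'a"

definition idxs :: "nat \<Rightarrow> nat \<Rightarrow> nat list set" where
  "idxs N m = {xs. length xs = m \<and> set xs \<subseteq> {..<N}}"

definition tmul :: "nat \<Rightarrow> nat \<Rightarrow> 'a::semiring_0 tmat \<Rightarrow> 'a tmat \<Rightarrow> 'a tmat" where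
  "tmul N m X Y = (\<lambda>I J. \<Sum>K\<in>idxs N m. X I K * Y K J)"

definition tadd :: "'a::plus tmat \<Rightarrow> 'a tmat \<Rightarrow> 'a tmat" where
  "tadd X Y = (\<lambda>I J. X I J + Y I J)"

definition tone :: "'a::{zero,one} tmat" where
  "tone = (\<lambda>I J. if I = J then 1 else 0)"

definition ttr :: "nat \<Rightarrow> nat \<Rightarrow> 'a::comm_monoid_add tmat \<Rightarrow> 'a" where
  "ttr N m X = (\<Sum>I\<in>idxs N m. X I I)"

definition tprods :: "nat \<Rightarrow> nat \<Rightarrow> 'a::semiring_1 tmat list \<Rightarrow> 'a tmat" where
  "tprods N m Xs = foldr (tmul N m) Xs tone"

(* A_a : the N x N matrix A = sum e_ij \<otimes> A i j placed in tensor copy a (of m copies) *)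
definition emb1 :: "nat \<Rightarrow> nat \<Rightarrow> (nat \<Rightarrow> nat \<Rightarrow> 'a::zero) \<Rightarrow> 'a tmat" where
  "emb1 m a A = (\<lambda>I J. if (\<forall>c<m. c \<noteq> a - 1 \<longrightarrow> I ! c = J ! c)
                       then A (I ! (a - 1)) (J ! (a - 1)) else 0)"

(* R_{ab} : R = sum R i j k l  e_ij \<otimes> e_kl  placed in tensor copies a and b *)
definition emb2 :: "nat \<Rightarrow> nat \<Rightarrow> nat \<Rightarrow> (nat \<Rightarrow> nat \<Rightarrow> nat \<Rightarrow> nat \<Rightarrow> 'a::zero) \<Rightarrow> 'a tmat" where
  "emb2 m a b R = (\<lambda>I J. if (\<forall>c<m. c \<noteq> a - 1 \<and> c \<noteq> b - 1 \<longrightarrow> I ! c = J ! c)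
                   then R (I ! (a - 1)) (J ! (a - 1)) (I ! (b - 1)) (J ! (b - 1)) else 0)"

definition Pop :: "nat \<Rightarrow> nat \<Rightarrow> nat \<Rightarrow> nat \<Rightarrow> 'a::{zero,one}" where
  "Pop i j k l = (if k = j \<and> l = i then 1 else 0)"

definition Tcal :: "nat \<Rightarrow> nat \<Rightarrow> nat \<Rightarrow> nat \<Rightarrow> 'a::ring_1" where
  "Tcal i j k l = (if k = j \<and> l = i then of_int (sgn (int j - int i)) else 0)"

(* T(y) = sum_i e_ii \<otimes> e_ii + 1/(1-y) sum_{i<j} e_ij \<otimes> e_ji + 1/(1+y) sum_{i>j} e_ij \<otimes> e_ji,
   as formal power series in y = fps_X;
   1/(1-y) = sum_n y^n and 1/(1+y) = sum_n (-1)^n y^n *)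
definition Tser :: "nat \<Rightarrow> nat \<Rightarrow> nat \<Rightarrow> nat \<Rightarrow> 'a::ring_1 fps" where
  "Tser i j k l = (if k = j \<and> l = i then
                     (if i = j then 1
                      else if i < j then Abs_fps (\<lambda>n. 1)
                      else Abs_fps (\<lambda>n. (-1) ^ n))
                   else 0)"

definition theta_term :: "nat \<Rightarrow> (nat \<Rightarrow> nat \<Rightarrow> 'a::ring_1) \<Rightarrow> nat \<Rightarrow> 'a fps" where
  "theta_term N L s = ttr N s (tprods N s
      (map (\<lambda>a. emb2 s a (a + 1) Tser) (rev [1..<s])
       @ map (\<lambda>a. emb1 s a (\<lambda>i j. fps_const (L i j))) [1..<s + 1]))"

(* theta_m = coefficient of y^m in sum_{s>=1} y^s theta_term s; only s <= m contribute *)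
definition theta :: "nat \<Rightarrow> (nat \<Rightarrow> nat \<Rightarrow> 'a::ring_1) \<Rightarrow> nat \<Rightarrow> 'a" where
  "theta N L m = fps_nth (\<Sum>s = 1..m. fps_X ^ s * theta_term N L s) m"

definition Mstep :: "nat \<Rightarrow> (nat \<Rightarrow> nat \<Rightarrow> 'a::ring_1) \<Rightarrow> nat \<Rightarrow> nat \<Rightarrow> 'a tmat \<Rightarrow> 'a tmat" where
  "Mstep N L m a X = tadd (tmul N m (emb2 m a (a + 1) Tcal) X)
                          (tmul N m (tmul N m (emb2 m a (a + 1) Pop) X) (emb1 m a L))"

definition Mbar :: "nat \<Rightarrow> (nat \<Rightarrow> nat \<Rightarrow> 'a::ring_1) \<Rightarrow> nat \<Rightarrow> 'a tmat" where
  "Mbar N L m = tmul N m (fold (Mstep N L m) [1..<m] tone) (emb1 m m L)"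

end

theory Submission
  imports Defs
begin



lemma idxs_finite: "finite (idxs N n)"
proof -
  have "idxs N n = {xs. set xs \<subseteq> {..<N} \<and> length xs = n}" by (auto simp: idxs_def)
  thus ?thesis using finite_lists_length_eq[of "{..<N}" n] by simp
qed

lemma idxs_Suc: "idxs N (Suc n) = (\<lambda>(x,xs). x # xs) ` ({..<N} \<times> idxs N n)"
proof
  show "idxs N (Suc n) \<subseteq> (\<lambda>(x,xs). x # xs) ` ({..<N} \<times> idxs N n)"
  proof
    fix ys assume "ys \<in> idxs N (Suc n)"
    then obtain x xs where "ys = x # xs" "x < N" "xs \<in> idxs N n"
      by (cases ys) (auto simp: idxs_def)
    thus "ys \<in> (\<lambda>(x,xs). x # xs) ` ({..<N} \<times> idxs N n)" by force
  qed
qed (auto simp: idxs_def)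

lemma idxs_nth: "I \<in> idxs N m \<Longrightarrow> b < m \<Longrightarrow> I ! b < N"
proof -
  assume "I \<in> idxs N m" "b < m"
  hence "I ! b \<in> set I" "set I \<subseteq> {..<N}" by (auto simp: idxs_def)
  thus "I ! b < N" by blast
qed

lemma idxs_upd: "I \<in> idxs N m \<Longrightarrow> x < N \<Longrightarrow> I[p := x] \<in> idxs N m"
  by (auto simp: idxs_def dest: subsetD[OF set_update_subset_insert])



lemma sum_upd:
  assumes I: "I \<in> idxs N m" and p: "p < m"
  shows "(\<Sum>K\<in>idxs N m. if (\<forall>c<m. c \<noteq> p \<longrightarrow> I ! c = K ! c) then f K else 0)
         = (\<Sum>x<N. f (I[p := x]))"
proof -
  have lenI: "length I = m" using I by (simp add: idxs_def)
  have "(\<Sum>K\<in>idxs N m. if (\<forall>c<m. c \<noteq> p \<longrightarrow> I ! c = K ! c) then f K else 0)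
      = sum f {K\<in>idxs N m. \<forall>c<m. c \<noteq> p \<longrightarrow> I ! c = K ! c}"
    by (simp add: sum.inter_filter idxs_finite)
  also have "{K\<in>idxs N m. \<forall>c<m. c \<noteq> p \<longrightarrow> I ! c = K ! c} = (\<lambda>x. I[p:=x]) ` {..<N}"
  proof
    show "{K\<in>idxs N m. \<forall>c<m. c \<noteq> p \<longrightarrow> I ! c = K ! c} \<subseteq> (\<lambda>x. I[p:=x]) ` {..<N}"
    proof
      fix K assume K: "K \<in> {K\<in>idxs N m. \<forall>c<m. c \<noteq> p \<longrightarrow> I ! c = K ! c}"
      hence K1: "K \<in> idxs N m" and K2: "\<forall>c<m. c \<noteq> p \<longrightarrow> I ! c = K ! c" by auto
      have lenK: "length K = m" using K1 by (simp add: idxs_def)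
      have "K = I[p := K ! p]"
      proof (rule nth_equalityI)
        show "length K = length (I[p := K ! p])" using lenK lenI by simp
        fix i assume "i < length K"
        thus "K ! i = I[p := K ! p] ! i" using K2 lenK lenI by (cases "i = p") auto
      qed
      moreover have "K ! p < N" using K1 p by (rule idxs_nth)
      ultimately show "K \<in> (\<lambda>x. I[p:=x]) ` {..<N}" by blast
    qed
    show "(\<lambda>x. I[p:=x]) ` {..<N} \<subseteq> {K\<in>idxs N m. \<forall>c<m. c \<noteq> p \<longrightarrow> I ! c = K ! c}"
    proof
      fix K assume "K \<in> (\<lambda>x. I[p:=x]) ` {..<N}"
      then obtain x where x: "x < N" "K = I[p:=x]" by blast
      show "K \<in> {K\<in>idxs N m. \<forall>c<m. c \<noteq> p \<longrightarrow> I ! c = K ! c}"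
        using x I idxs_upd[OF I x(1)] by simp
    qed
  qed
  also have "sum f ((\<lambda>x. I[p:=x]) ` {..<N}) = (\<Sum>x<N. f (I[p := x]))"
  proof (rule sum.reindex[unfolded comp_def])
    show "inj_on (\<lambda>x. I[p:=x]) {..<N}"
    proof (rule inj_onI)
      fix x y assume "I[p:=x] = I[p:=y]"
      hence "I[p:=x] ! p = I[p:=y] ! p" by simp
      thus "x = y" using p lenI by simp
    qed
  qed
  finally show ?thesis .
qed


lemma emb1_left:
  assumes I: "I \<in> idxs N m" and a: "1 \<le> a" "a \<le> m"
  shows "tmul N m (emb1 m a A) Y I J = (\<Sum>x<N. A (I!(a-1)) x * Y (I[a-1:=x]) J)"
proof -
  have "tmul N m (emb1 m a A) Y I J = (\<Sum>K\<in>idxs N m. if (\<forall>c<m. c \<noteq> a-1 \<longrightarrow> I ! c = K ! c) then A (I!(a-1)) (K!(a-1)) * Y K J else 0)"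
    unfolding tmul_def emb1_def by (intro sum.cong) auto
  also have "\<dots> = (\<Sum>x<N. A (I!(a-1)) (I[a-1:=x]!(a-1)) * Y (I[a-1:=x]) J)"
    by (rule sum_upd[OF I]) (use a in auto)
  also have "\<dots> = (\<Sum>x<N. A (I!(a-1)) x * Y (I[a-1:=x]) J)"
    using I a by (intro sum.cong) (auto simp: idxs_def)
  finally show ?thesis .
qed



lemma emb1_right:
  assumes J: "J \<in> idxs N m" and a: "1 \<le> a" "a \<le> m"
  shows "tmul N m Y (emb1 m a A) I J = (\<Sum>x<N. Y I (J[a-1:=x]) * A x (J!(a-1)))"
proof -
  have "tmul N m Y (emb1 m a A) I J = (\<Sum>K\<in>idxs N m. if (\<forall>c<m. c \<noteq> a-1 \<longrightarrow> J ! c = K ! c) then Y I K * A (K!(a-1)) (J!(a-1)) else 0)"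
    unfolding tmul_def emb1_def by (intro sum.cong) auto
  also have "\<dots> = (\<Sum>x<N. Y I (J[a-1:=x]) * A (J[a-1:=x]!(a-1)) (J!(a-1)))"
    by (rule sum_upd[OF J]) (use a in auto)
  also have "\<dots> = (\<Sum>x<N. Y I (J[a-1:=x]) * A x (J!(a-1)))"
    using J a by (intro sum.cong) (auto simp: idxs_def)
  finally show ?thesis .
qed

definition sw :: "nat \<Rightarrow> nat list \<Rightarrow> nat list" where
  "sw p I = I[p := I!Suc p, Suc p := I!p]"

lemma sw_idxs: "I \<in> idxs N m \<Longrightarrow> Suc p < m \<Longrightarrow> sw p I \<in> idxs N m"
  unfolding sw_def by (intro idxs_upd) (auto simp: idxs_nth)

lemma emb2_left:
  assumes I: "I \<in> idxs N m" and a: "1 \<le> a" "a < m"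
    and R: "\<And>i j k l. k \<noteq> j \<or> l \<noteq> i \<Longrightarrow> R i j k l = 0"
  shows "tmul N m (emb2 m a (a+1) R) Y I J = R (I!(a-1)) (I!a) (I!a) (I!(a-1)) * Y (sw (a-1) I) J"
proof -
  let ?K = "sw (a-1) I"
  have lenI: "length I = m" using I by (simp add: idxs_def)
  have K: "?K \<in> idxs N m" using sw_idxs[OF I, of "a-1"] a by simp
  have z: "emb2 m a (a+1) R I K * Y K J = 0" if KI: "K \<in> idxs N m" "K \<noteq> ?K" for K
  proof -
    have lenK: "length K = m" using KI by (simp add: idxs_def)
    have e: "emb2 m a (a+1) R I K = (if (\<forall>c<m. c \<noteq> a - 1 \<and> c \<noteq> a \<longrightarrow> I ! c = K ! c)
                   then R (I ! (a - 1)) (K ! (a - 1)) (I ! a) (K ! a) else 0)"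
      unfolding emb2_def by (rule if_cong) simp_all
    show ?thesis
    proof (cases "\<forall>c<m. c \<noteq> a - 1 \<and> c \<noteq> a \<longrightarrow> I ! c = K ! c")
      case C: True
      show ?thesis
      proof (cases "K!(a-1) = I!a \<and> K!a = I!(a-1)")
        case True
        have "K = ?K"
        proof (rule nth_equalityI)
          show "length K = length ?K" using lenK lenI by (simp add: sw_def)
          fix i assume "i < length K"
          thus "K ! i = ?K ! i" using C True lenK lenI a
            by (cases "i = a - 1"; cases "i = a") (auto simp: sw_def nth_list_update)
        qed
        with KI show ?thesis by simp
      next
        case False
        hence "R (I ! (a - 1)) (K ! (a - 1)) (I ! a) (K ! a) = 0" by (intro R) auto
        thus ?thesis using e by simp
      qed
    next
      case False thus ?thesis by (simp only: e if_not_P[OF False]) simp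
    qed
  qed
  have "tmul N m (emb2 m a (a+1) R) Y I J = (\<Sum>K\<in>idxs N m. emb2 m a (a+1) R I K * Y K J)"
    by (simp add: tmul_def)
  also have "\<dots> = emb2 m a (a+1) R I ?K * Y ?K J"
    using K z idxs_finite by (subst sum.mono_neutral_right[where S="{?K}"]) auto
  also have "emb2 m a (a+1) R I ?K = R (I!(a-1)) (I!a) (I!a) (I!(a-1))"
  proof -
    have "\<forall>c<m. c \<noteq> a - 1 \<and> c \<noteq> a \<longrightarrow> I ! c = ?K ! c" using a by (auto simp: sw_def nth_list_update)
    moreover have "?K ! (a-1) = I!a" "?K ! a = I!(a-1)" using a lenI by (auto simp: sw_def nth_list_update)
    ultimately show ?thesis unfolding emb2_def by (simp only: add_diff_cancel_right' if_True) simp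
  qed
  finally show ?thesis .
qed



definition rotk :: "nat \<Rightarrow> nat list \<Rightarrow> nat list" where
  "rotk k I = (I!k # take k I) @ drop (Suc k) I"

lemma rotk_sw: "Suc k < length I \<Longrightarrow> rotk k (sw k I) = rotk (Suc k) I"
  unfolding rotk_def sw_def
  apply (intro nth_equalityI)
   apply (auto simp: nth_append nth_list_update min_def nth_Cons' take_Suc_conv_app_nth)
  apply (rule arg_cong[where f="(!) I"], arith)
  done



lemma chain:
  assumes I: "I \<in> idxs N s" and k: "k < s"
    and R: "\<And>i j k l. k \<noteq> j \<or> l \<noteq> i \<Longrightarrow> R i j k l = 0"
  shows "foldr (tmul N s) (map (\<lambda>a. emb2 s a (a+1) R) (rev [1..<Suc k])) Y I J
       = prod_list (map (\<lambda>b. R (I!b) (I!k) (I!k) (I!b)) (rev [0..<k])) * Y (rotk k I) J"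
  using I k
proof (induction k arbitrary: I)
  case 0
  have "rotk 0 I = I" using 0 by (cases I) (auto simp: rotk_def idxs_def)
  thus ?case by simp
next
  case (Suc k)
  have lenI: "length I = s" using Suc.prems by (simp add: idxs_def)
  have "foldr (tmul N s) (map (\<lambda>a. emb2 s a (a+1) R) (rev [1..<Suc (Suc k)])) Y I J
      = tmul N s (emb2 s (Suc k) (Suc k + 1) R) (foldr (tmul N s) (map (\<lambda>a. emb2 s a (a+1) R) (rev [1..<Suc k])) Y) I J"
    by simp
  also have "\<dots> = R (I!k) (I!Suc k) (I!Suc k) (I!k) * foldr (tmul N s) (map (\<lambda>a. emb2 s a (a+1) R) (rev [1..<Suc k])) Y (sw k I) J"
    using emb2_left[OF Suc.prems(1), of "Suc k" R] Suc.prems R by simp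
  also have "\<dots> = R (I!k) (I!Suc k) (I!Suc k) (I!k) * (prod_list (map (\<lambda>b. R (sw k I!b) (sw k I!k) (sw k I!k) (sw k I!b)) (rev [0..<k])) * Y (rotk k (sw k I)) J)"
    using Suc.IH[of "sw k I"] sw_idxs[OF Suc.prems(1)] Suc.prems by simp
  also have "map (\<lambda>b. R (sw k I!b) (sw k I!k) (sw k I!k) (sw k I!b)) (rev [0..<k])
           = map (\<lambda>b. R (I!b) (I!Suc k) (I!Suc k) (I!b)) (rev [0..<k])"
    using Suc.prems lenI by (auto simp: sw_def nth_list_update)
  also have "rotk k (sw k I) = rotk (Suc k) I" using rotk_sw Suc.prems lenI by simp
  finally show ?case by (simp add: mult.assoc)
qed

lemma lprod:
  assumes K: "K \<in> idxs N s" and J: "J \<in> idxs N s" and j: "j \<le> s"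
  shows "foldr (tmul N s) (map (\<lambda>a. emb1 s a A) [Suc j..<Suc s]) tone K J
       = (if take j K = take j J then prod_list (map (\<lambda>b. A (K!b) (J!b)) [j..<s]) else 0)"
  using K j
proof (induction "s - j" arbitrary: j K)
  case 0
  hence "j = s" by simp
  moreover have "length K = s" "length J = s" using 0 J by (auto simp: idxs_def)
  ultimately show ?case by (simp add: tone_def)
next
  case (Suc d)
  have lenK: "length K = s" and lenJ: "length J = s" using Suc.prems J by (auto simp: idxs_def)
  have js: "j < s" using Suc.hyps by simp
  have up: "[Suc j..<Suc s] = Suc j # [Suc (Suc j)..<Suc s]" using js by (simp add: upt_conv_Cons)
  have "foldr (tmul N s) (map (\<lambda>a. emb1 s a A) [Suc j..<Suc s]) tone K J
     = (\<Sum>x<N. A (K!j) x * foldr (tmul N s) (map (\<lambda>a. emb1 s a A) [Suc (Suc j)..<Suc s]) tone (K[j:=x]) J)"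
  proof -
    have e: "\<And>Y. tmul N s (emb1 s (Suc j) A) Y K J = (\<Sum>x<N. A (K!j) x * Y (K[j:=x]) J)"
      using emb1_left[OF Suc.prems(1), of "Suc j"] js by simp
    show ?thesis unfolding up by (simp only: list.map foldr_Cons comp_def e)
  qed
  also have "\<dots> = (\<Sum>x<N. A (K!j) x * (if take (Suc j) (K[j:=x]) = take (Suc j) J then prod_list (map (\<lambda>b. A (K[j:=x]!b) (J!b)) [Suc j..<s]) else 0))"
    using Suc.hyps Suc.prems js idxs_upd by (intro sum.cong refl arg_cong2[where f="(*)"] Suc.hyps(1)) auto
  also have "\<dots> = (\<Sum>x<N. if x = J!j then (if take j K = take j J then A (K!j) (J!j) * prod_list (map (\<lambda>b. A (K!b) (J!b)) [Suc j..<s]) else 0) else 0)"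
  proof (intro sum.cong refl)
    fix x
    have tk: "take (Suc j) (K[j:=x]) = take j K @ [x]" using lenK js
      by (simp add: take_Suc_conv_app_nth take_update_cancel)
    have tj: "take (Suc j) J = take j J @ [J!j]" using lenJ js by (simp add: take_Suc_conv_app_nth)
    have mp: "map (\<lambda>b. A (K[j:=x]!b) (J!b)) [Suc j..<s] = map (\<lambda>b. A (K!b) (J!b)) [Suc j..<s]"
      by (auto simp: nth_list_update)
    show "A (K!j) x * (if take (Suc j) (K[j:=x]) = take (Suc j) J then prod_list (map (\<lambda>b. A (K[j:=x]!b) (J!b)) [Suc j..<s]) else 0)
       = (if x = J!j then (if take j K = take j J then A (K!j) (J!j) * prod_list (map (\<lambda>b. A (K!b) (J!b)) [Suc j..<s]) else 0) else 0)"
      unfolding tk tj mp by auto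
  qed
  also have "\<dots> = (if take j K = take j J then prod_list (map (\<lambda>b. A (K!b) (J!b)) [j..<s]) else 0)"
    using idxs_nth[OF J js] js by (simp add: upt_conv_Cons)
  finally show ?case .
qed



fun walk :: "(nat \<Rightarrow> nat \<Rightarrow> 'a::monoid_mult) \<Rightarrow> nat \<Rightarrow> nat list \<Rightarrow> 'a" where
  "walk F u [] = 1"
| "walk F u (x # xs) = F u x * walk F x xs"

lemma walk_nth: "walk F u xs = prod_list (map (\<lambda>b. F ((u#xs)!b) (xs!b)) [0..<length xs])"
proof (induction xs arbitrary: u)
  case Nil thus ?case by simp
next
  case (Cons x xs)
  have "[0..<length (x#xs)] = 0 # map Suc [0..<length xs]"
    by (simp only: length_Cons upt_conv_Cons[OF zero_less_Suc] map_Suc_upt)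
  thus ?case using Cons by (simp add: comp_def)
qed

definition cen :: "'a::semigroup_mult \<Rightarrow> bool" where
  "cen x \<longleftrightarrow> (\<forall>y. x * y = y * x)"

lemma cen_prod_list: "(\<And>x. x \<in> set xs \<Longrightarrow> cen x) \<Longrightarrow> cen (prod_list (xs :: 'a::monoid_mult list))"
  by (induction xs) (auto simp: cen_def mult.assoc, metis mult.assoc)

lemma prod_list_rev_cen: "(\<And>x. x \<in> set xs \<Longrightarrow> cen x) \<Longrightarrow> prod_list (rev xs) = prod_list (xs :: 'a::monoid_mult list)"
proof (induction xs)
  case (Cons x xs)
  have "prod_list (rev xs) = prod_list xs" using Cons by auto
  moreover have "cen x" using Cons.prems by simp
  ultimately show ?case by (simp add: cen_def)
qed simp

lemma walk_cen:
  assumes "\<And>x. cen (c x)"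
  shows "walk (\<lambda>x y. c x * F x y) u xs = prod_list (map c (butlast (u#xs))) * walk F u xs"
proof (induction xs arbitrary: u)
  case Nil thus ?case by simp
next
  case (Cons x xs)
  have ce: "cen (prod_list (map c (butlast (x#xs))))" by (rule cen_prod_list) (auto simp: assms)
  have "walk (\<lambda>x y. c x * F x y) u (x#xs) = c u * F u x * (prod_list (map c (butlast (x#xs))) * walk F x xs)"
    using Cons by simp
  also have "\<dots> = c u * (F u x * prod_list (map c (butlast (x#xs)))) * walk F x xs" by (simp add: mult.assoc)
  also have "\<dots> = c u * (prod_list (map c (butlast (x#xs))) * F u x) * walk F x xs" using ce by (simp add: cen_def)
  finally show ?case by (simp add: mult.assoc)
qed

fun col :: "nat \<Rightarrow> (nat \<Rightarrow> nat \<Rightarrow> 'a::semiring_1) \<Rightarrow> nat \<Rightarrow> nat \<Rightarrow> nat \<Rightarrow> 'a" where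
  "col N F v 0 u = (if u = v then 1 else 0)"
| "col N F v (Suc n) u = (\<Sum>x<N. F u x * col N F v n x)"

lemma col_walk: "col N F v n u = (\<Sum>xs\<in>idxs N n. if last (u#xs) = v then walk F u xs else 0)"
proof (induction n arbitrary: u)
  case 0
  have "idxs N 0 = {[]}" by (auto simp: idxs_def)
  thus ?case by simp
next
  case (Suc n)
  have inj: "inj_on (\<lambda>(x,xs). x # xs) ({..<N} \<times> idxs N n)" by (auto simp: inj_on_def)
  have "(\<Sum>xs\<in>idxs N (Suc n). if last (u#xs) = v then walk F u xs else 0)
      = (\<Sum>p\<in>{..<N} \<times> idxs N n. (\<lambda>ys. if last (u#ys) = v then walk F u ys else 0) ((\<lambda>(x,xs). x # xs) p))"
    unfolding idxs_Suc by (rule sum.reindex[OF inj, unfolded comp_def])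
  also have "\<dots> = (\<Sum>(x,xs)\<in>{..<N} \<times> idxs N n. F u x * (if last (x#xs) = v then walk F x xs else 0))"
    by (intro sum.cong refl) auto
  also have "\<dots> = (\<Sum>x<N. \<Sum>xs\<in>idxs N n. F u x * (if last (x#xs) = v then walk F x xs else 0))"
    by (rule sum.cartesian_product[symmetric])
  also have "\<dots> = (\<Sum>x<N. F u x * col N F v n x)"
    by (simp add: Suc sum_distrib_left)
  finally show ?case by simp
qed

lemma closed_walks:
  assumes n: "1 \<le> n"
  shows "(\<Sum>I\<in>idxs N n. walk (G (last I)) (last I) I) = (\<Sum>v<N. col N (G v) v n v)"
proof -
  have "(\<Sum>v<N. col N (G v) v n v) = (\<Sum>v<N. \<Sum>I\<in>idxs N n. if last I = v then walk (G v) v I else 0)"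
  proof (intro sum.cong refl)
    fix v
    show "col N (G v) v n v = (\<Sum>I\<in>idxs N n. if last I = v then walk (G v) v I else 0)"
      unfolding col_walk
    proof (intro sum.cong refl)
      fix I assume "I \<in> idxs N n"
      hence "I \<noteq> []" using n by (auto simp: idxs_def)
      thus "(if last (v#I) = v then walk (G v) v I else 0) = (if last I = v then walk (G v) v I else 0)" by simp
    qed
  qed
  also have "\<dots> = (\<Sum>I\<in>idxs N n. \<Sum>v<N. if last I = v then walk (G v) v I else 0)"
    by (rule sum.swap)
  also have "\<dots> = (\<Sum>I\<in>idxs N n. walk (G (last I)) (last I) I)"
  proof (intro sum.cong refl)
    fix I assume I: "I \<in> idxs N n"
    hence "I \<noteq> []" using n by (auto simp: idxs_def)
    hence "last I \<in> set I" by simp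
    hence "last I < N" using I by (auto simp: idxs_def)
    thus "(\<Sum>v<N. if last I = v then walk (G v) v I else 0) = walk (G (last I)) (last I) I"
      by (simp add: sum.delta)
  qed
  finally show ?thesis by simp
qed




lemma Tser_diag: "(Tser x v v x :: 'a::ring_1 fps) = Abs_fps (\<lambda>j. of_int (sgn (int v - int x) ^ j))"
proof (rule fps_ext)
  fix j
  show "fps_nth (Tser x v v x :: 'a fps) j = fps_nth (Abs_fps (\<lambda>j. of_int (sgn (int v - int x) ^ j))) j"
    by (cases "x = v"; cases "x < v") (auto simp: Tser_def fps_one_nth power_0_left)
qed

lemma cen_of_int_fps: "cen (Abs_fps (\<lambda>j. of_int (z j)) :: 'a::ring_1 fps)"
  unfolding cen_def
proof (intro allI fps_ext)
  fix g :: "'a fps" and n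
  have "fps_nth (Abs_fps (\<lambda>j. of_int (z j)) * g) n = (\<Sum>i=0..n. of_int (z i) * fps_nth g (n - i))"
    by (simp add: fps_mult_nth)
  also have "\<dots> = (\<Sum>i=0..n. fps_nth g (n - i) * of_int (z (n - (n - i))))"
    by (intro sum.cong refl) (simp add: mult_of_int_commute)
  also have "\<dots> = (\<Sum>i=0..n. fps_nth g i * of_int (z (n - i)))"
    by (subst sum.atLeastAtMost_rev[of "\<lambda>i. fps_nth g i * of_int (z (n - i))" 0 n])
       (intro sum.cong refl, simp)
  also have "\<dots> = fps_nth (g * Abs_fps (\<lambda>j. of_int (z j))) n"
    by (simp add: fps_mult_nth)
  finally show "fps_nth (Abs_fps (\<lambda>j. of_int (z j)) * g) n = fps_nth (g * Abs_fps (\<lambda>j. of_int (z j))) n" .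
qed

lemma cen_Tser: "cen (Tser x v v x :: 'a::ring_1 fps)"
  unfolding Tser_diag by (rule cen_of_int_fps)

lemma geo_step:
  fixes G :: "'a::ring_1 fps"
  shows "fps_nth (Abs_fps (\<lambda>j. of_int (z ^ j)) * G) 0 = fps_nth G 0"
    and "fps_nth (Abs_fps (\<lambda>j. of_int (z ^ j)) * G) (Suc k) = fps_nth G (Suc k) + of_int z * fps_nth (Abs_fps (\<lambda>j. of_int (z ^ j)) * G) k"
proof -
  show "fps_nth (Abs_fps (\<lambda>j. of_int (z ^ j)) * G) 0 = fps_nth G 0" by (simp add: fps_mult_nth)
  have "fps_nth (Abs_fps (\<lambda>j. of_int (z ^ j)) * G) (Suc k) = (\<Sum>i=0..Suc k. of_int (z ^ i) * fps_nth G (Suc k - i))"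
    by (simp add: fps_mult_nth)
  also have "\<dots> = fps_nth G (Suc k) + (\<Sum>i=0..k. of_int (z ^ Suc i) * fps_nth G (Suc k - Suc i))"
    by (subst sum.atLeast0_atMost_Suc_shift) simp
  also have "(\<Sum>i=0..k. of_int (z ^ Suc i) * fps_nth G (Suc k - Suc i)) = of_int z * (\<Sum>i=0..k. of_int (z ^ i) * fps_nth G (k - i))"
    by (simp add: sum_distrib_left mult.assoc)
  also have "(\<Sum>i=0..k. of_int (z ^ i) * fps_nth G (k - i)) = fps_nth (Abs_fps (\<lambda>j. of_int (z ^ j)) * G) k"
    by (simp add: fps_mult_nth)
  finally show "fps_nth (Abs_fps (\<lambda>j. of_int (z ^ j)) * G) (Suc k) = fps_nth G (Suc k) + of_int z * fps_nth (Abs_fps (\<lambda>j. of_int (z ^ j)) * G) k" .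
qed

definition FL :: "(nat \<Rightarrow> nat \<Rightarrow> 'a::ring_1) \<Rightarrow> nat \<Rightarrow> nat \<Rightarrow> nat \<Rightarrow> 'a fps" where
  "FL L v x y = Tser x v v x * fps_const (L x y)"

definition Mv :: "(nat \<Rightarrow> nat \<Rightarrow> 'a::ring_1) \<Rightarrow> nat \<Rightarrow> nat \<Rightarrow> nat \<Rightarrow> 'a" where
  "Mv L v x y = L x y + (if x = y then of_int (sgn (int v - int y)) else 0)"

lemma colFL_S0: "fps_nth (col N (FL L v) v (Suc s) u) 0 = (\<Sum>x<N. L u x * fps_nth (col N (FL L v) v s x) 0)"
  and colFL_SS: "fps_nth (col N (FL L v) v (Suc s) u) (Suc k) = (\<Sum>x<N. L u x * fps_nth (col N (FL L v) v s x) (Suc k))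
        + of_int (sgn (int v - int u)) * fps_nth (col N (FL L v) v (Suc s) u) k"
proof -
  let ?G = "\<Sum>x<N. fps_const (L u x) * col N (FL L v) v s x"
  have e: "col N (FL L v) v (Suc s) u = Abs_fps (\<lambda>j. of_int (sgn (int v - int u) ^ j)) * ?G"
    by (simp add: FL_def sum_distrib_left mult.assoc Tser_diag)
  have g: "fps_nth ?G k = (\<Sum>x<N. L u x * fps_nth (col N (FL L v) v s x) k)" for k
    by (simp add: fps_sum_nth)
  show "fps_nth (col N (FL L v) v (Suc s) u) 0 = (\<Sum>x<N. L u x * fps_nth (col N (FL L v) v s x) 0)"
    unfolding e geo_step(1) g ..
  show "fps_nth (col N (FL L v) v (Suc s) u) (Suc k) = (\<Sum>x<N. L u x * fps_nth (col N (FL L v) v s x) (Suc k))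
        + of_int (sgn (int v - int u)) * fps_nth (col N (FL L v) v (Suc s) u) k"
    unfolding e geo_step(2) g ..
qed




lemma sum_atMost_split0: "(\<Sum>s\<le>n. f s) = f 0 + (\<Sum>s<n. f (Suc s)) " for f :: "nat \<Rightarrow> 'a::comm_monoid_add"
proof (cases n)
  case (Suc n')
  show ?thesis unfolding Suc by (subst sum.atMost_Suc_shift) (simp add: lessThan_Suc_atMost)
qed simp

lemma sum_atMost_if_less: "(\<Sum>s\<le>n. if s < n then f s else 0) = (\<Sum>s<n. f s)" for f :: "nat \<Rightarrow> 'a::comm_monoid_add"
  by (simp add: lessThan_Suc_atMost[symmetric] sum.lessThan_Suc)

lemma col_compare:
  "u < N \<Longrightarrow> col N (Mv L v) v n u = (\<Sum>s\<le>n. fps_nth (col N (FL L v) v s u) (n - s))"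
proof (induction n arbitrary: u)
  case 0 thus ?case by simp
next
  case (Suc n)
  define D where "D s x k = fps_nth (col N (FL L v) v s x) k" for s x k
  define z :: 'a where "z = of_int (sgn (int v - int u))"
  have z0: "z * D 0 u k = 0" for k by (cases "u = v") (auto simp: D_def z_def)
  have IH: "\<And>x. x < N \<Longrightarrow> col N (Mv L v) v n x = (\<Sum>s\<le>n. D s x (n - s))"
    using Suc.IH by (simp add: D_def)
  have "col N (Mv L v) v (Suc n) u = (\<Sum>x<N. L u x * col N (Mv L v) v n x + (if u = x then z * col N (Mv L v) v n x else 0))"
    unfolding col.simps by (intro sum.cong refl) (auto simp: Mv_def distrib_right z_def)
  also have "\<dots> = (\<Sum>x<N. L u x * col N (Mv L v) v n x) + (\<Sum>x<N. if u = x then z * col N (Mv L v) v n x else 0)"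
    by (rule sum.distrib)
  also have "(\<Sum>x<N. if u = x then z * col N (Mv L v) v n x else 0) = z * col N (Mv L v) v n u"
    using Suc.prems by simp
  also have "(\<Sum>x<N. L u x * col N (Mv L v) v n x) = (\<Sum>s\<le>n. \<Sum>x<N. L u x * D s x (n - s))"
    by (simp add: IH sum_distrib_left sum.swap[of _ "{..<N}"])
  also have "z * col N (Mv L v) v n u = (\<Sum>s<n. z * D (Suc s) u (n - Suc s))"
    by (simp add: IH Suc.prems sum_atMost_split0[of "\<lambda>s. D s u (n - s)"] distrib_left z0 sum_distrib_left)
  also have "(\<Sum>s\<le>n. \<Sum>x<N. L u x * D s x (n - s)) + (\<Sum>s<n. z * D (Suc s) u (n - Suc s))
      = (\<Sum>s\<le>n. D (Suc s) u (n - s))"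
  proof -
    have "D (Suc s) u (n - s) = (\<Sum>x<N. L u x * D s x (n - s)) + (if s < n then z * D (Suc s) u (n - Suc s) else 0)"
      if "s \<le> n" for s
    proof (cases "s < n")
      case True
      hence nn: "n - s = Suc (n - Suc s)" by simp
      show ?thesis unfolding nn D_def z_def if_P[OF True] by (rule colFL_SS)
    next
      case False
      hence "n - s = 0" by simp
      thus ?thesis using False unfolding D_def by (simp only: colFL_S0 if_not_P[OF False]) simp
    qed
    hence "(\<Sum>s\<le>n. D (Suc s) u (n - s)) = (\<Sum>s\<le>n. (\<Sum>x<N. L u x * D s x (n - s)) + (if s < n then z * D (Suc s) u (n - Suc s) else 0))"
      by (intro sum.cong refl) auto
    also have "\<dots> = (\<Sum>s\<le>n. \<Sum>x<N. L u x * D s x (n - s)) + (\<Sum>s<n. z * D (Suc s) u (n - Suc s))"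
      by (simp add: sum.distrib sum_atMost_if_less)
    finally show ?thesis by simp
  qed
  also have "(\<Sum>s\<le>n. D (Suc s) u (n - s)) = (\<Sum>s\<le>Suc n. D s u (Suc n - s))"
  proof -
    have "(\<Sum>s\<le>Suc n. D s u (Suc n - s)) = D 0 u (Suc n) + (\<Sum>s\<le>n. D (Suc s) u (Suc n - Suc s))"
      by (subst sum.atMost_Suc_shift) (simp only: minus_nat.diff_0)
    thus ?thesis by (simp add: D_def del: col.simps(2))
  qed
  finally show ?case by (simp add: D_def)
qed




lemma rotk_last:
  assumes I: "I \<in> idxs N s" and s: "1 \<le> s"
  shows "rotk (s - 1) I \<in> idxs N s" and "\<And>b. b < s \<Longrightarrow> rotk (s - 1) I ! b = (last I # I) ! b"
proof -
  have lenI: "length I = s" using I by (simp add: idxs_def)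
  have ne: "I \<noteq> []" using lenI s by auto
  have r: "rotk (s - 1) I = last I # butlast I"
    using lenI s ne by (simp add: rotk_def last_conv_nth butlast_conv_take)
  show "rotk (s - 1) I \<in> idxs N s"
  proof -
    have "last I = I ! (s - 1)" using ne lenI by (simp add: last_conv_nth)
    hence "last I < N" using idxs_nth[OF I, of "s - 1"] s by simp
    thus ?thesis unfolding r using I ne lenI s by (auto simp: idxs_def dest: in_set_butlastD)
  qed
  fix b assume "b < s"
  thus "rotk (s - 1) I ! b = (last I # I) ! b"
    unfolding r using lenI by (cases b) (auto simp: nth_butlast)
qed

lemma Tser_swap0: "k \<noteq> j \<or> l \<noteq> i \<Longrightarrow> Tser i j k l = 0"
  by (auto simp: Tser_def)

lemma theta_term_walk:
  assumes s: "1 \<le> s"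
  shows "theta_term N L s = (\<Sum>v<N. col N (FL L v) v s v)"
proof -
  let ?L' = "\<lambda>i j. fps_const (L i j)"
  have "theta_term N L s = (\<Sum>I\<in>idxs N s. walk (FL L (last I)) (last I) I)"
    unfolding theta_term_def ttr_def
  proof (intro sum.cong refl)
    fix I assume I: "I \<in> idxs N s"
    have lenI: "length I = s" using I by (simp add: idxs_def)
    have ne: "I \<noteq> []" using lenI s by auto
    define v where "v = last I"
    have v: "I ! (s - 1) = v" using lenI ne s by (simp add: v_def last_conv_nth)
    have rv: "rev [1..<s] = rev [1..<Suc (s - 1)]" using s by simp
    have "tprods N s (map (\<lambda>a. emb2 s a (a + 1) Tser) (rev [1..<s]) @ map (\<lambda>a. emb1 s a ?L') [1..<s + 1]) I I
        = foldr (tmul N s) (map (\<lambda>a. emb2 s a (a + 1) Tser) (rev [1..<Suc (s - 1)])) (foldr (tmul N s) (map (\<lambda>a. emb1 s a ?L') [Suc 0..<Suc s]) tone) I I"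
      unfolding tprods_def foldr_append rv by simp
    also have "\<dots> = prod_list (map (\<lambda>b. Tser (I!b) v v (I!b)) (rev [0..<s - 1])) * foldr (tmul N s) (map (\<lambda>a. emb1 s a ?L') [Suc 0..<Suc s]) tone (rotk (s - 1) I) I"
      apply (subst chain[OF I _ Tser_swap0])
        apply (use s in simp)
       apply simp
      apply (simp only: v)
      done
    also have "foldr (tmul N s) (map (\<lambda>a. emb1 s a ?L') [Suc 0..<Suc s]) tone (rotk (s - 1) I) I
        = prod_list (map (\<lambda>b. ?L' (rotk (s - 1) I ! b) (I!b)) [0..<s])"
      using lprod[OF rotk_last(1)[OF I s] I le0, where A="?L'"] by (simp only: take0 if_True simp_thms)
    also have "\<dots> = walk ?L' v I"
      unfolding walk_nth lenI v_def using rotk_last(2)[OF I s] by (intro arg_cong[where f=prod_list] map_cong) auto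
    also have "prod_list (map (\<lambda>b. Tser (I!b) v v (I!b)) (rev [0..<s - 1])) = prod_list (map (\<lambda>x. Tser x v v x) (butlast I))"
    proof -
      have "prod_list (map (\<lambda>b. Tser (I!b) v v (I!b)) (rev [0..<s - 1])) = prod_list (rev (map (\<lambda>b. Tser (I!b) v v (I!b)) [0..<s - 1]))"
        by (simp add: rev_map)
      also have "\<dots> = prod_list (map (\<lambda>b. Tser (I!b) v v (I!b)) [0..<s - 1])"
        by (rule prod_list_rev_cen) (auto simp: cen_Tser)
      also have "map (\<lambda>b. Tser (I!b) v v (I!b)) [0..<s - 1] = map (\<lambda>x. Tser x v v x) (butlast I)"
        using lenI by (intro nth_equalityI) (auto simp: nth_butlast)
      finally show ?thesis .
    qed
    also have "prod_list (map (\<lambda>x. Tser x v v x) (butlast I)) * walk ?L' v I = walk (FL L v) v I"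
    proof -
      have "walk (FL L v) v I = prod_list (map (\<lambda>x. Tser x v v x) (butlast (v # I))) * walk ?L' v I"
        unfolding FL_def by (rule walk_cen) (rule cen_Tser)
      also have "butlast (v # I) = v # butlast I" using ne by simp
      finally show ?thesis by (simp add: Tser_def)
    qed
    finally show "tprods N s (map (\<lambda>a. emb2 s a (a + 1) Tser) (rev [1..<s]) @ map (\<lambda>a. emb1 s a ?L') [1..<s + 1]) I I
        = walk (FL L (last I)) (last I) I" by (simp add: v_def)
  qed
  also have "\<dots> = (\<Sum>v<N. col N (FL L v) v s v)"
    by (rule closed_walks[OF s])
  finally show ?thesis .
qed




definition Kof :: "nat list \<Rightarrow> nat \<Rightarrow> nat \<Rightarrow> nat" where
  "Kof I a b = (if b = 0 then I!a else I!(b-1))"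

definition psi :: "(nat \<Rightarrow> nat \<Rightarrow> 'a::ring_1) \<Rightarrow> nat list \<Rightarrow> nat \<Rightarrow> nat list \<Rightarrow> nat \<Rightarrow> 'a" where
  "psi L I a J b = L (Kof I a b) (J!b) + (if Kof I a b = J!b then of_int (sgn (int (I!a) - int (I!b))) else 0)"

definition Xf :: "(nat \<Rightarrow> nat \<Rightarrow> 'a::ring_1) \<Rightarrow> nat list \<Rightarrow> nat list \<Rightarrow> nat \<Rightarrow> 'a" where
  "Xf L I J a = (if drop (Suc a) I = drop (Suc a) J \<and> J!a = Kof I a a then prod_list (map (psi L I a J) [0..<a]) else 0)"

lemma Tcal_swap0: "k \<noteq> j \<or> l \<noteq> i \<Longrightarrow> Tcal i j k l = 0"
  by (auto simp: Tcal_def)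

lemma Pop_swap0: "k \<noteq> j \<or> l \<noteq> i \<Longrightarrow> Pop i j k l = 0"
  by (auto simp: Pop_def)

lemma Xstep:
  assumes "a < m" "I \<in> idxs N m" "J \<in> idxs N m"
  shows "fold (Mstep N L m) [1..<Suc a] tone I J = Xf L I J a"
  using assms
proof (induction a arbitrary: I J)
  case 0
  have l: "length I = m" "length J = m" using 0 by (auto simp: idxs_def)
  have "(I = J) \<longleftrightarrow> (drop 1 I = drop 1 J \<and> J!0 = I!0)"
    using l 0(1) by (cases I; cases J) auto
  thus ?case by (simp add: tone_def Xf_def Kof_def)
next
  case (Suc a)
  note I = Suc.prems(2) and J = Suc.prems(3)
  have lI: "length I = m" and lJ: "length J = m" using I J by (auto simp: idxs_def)
  have am: "Suc a < m" using Suc.prems by simp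
  define X where "X = fold (Mstep N L m) [1..<Suc a] tone"
  have IH: "\<And>I J. I \<in> idxs N m \<Longrightarrow> J \<in> idxs N m \<Longrightarrow> X I J = Xf L I J a"
    unfolding X_def using Suc.IH am by simp
  have f: "fold (Mstep N L m) [1..<Suc (Suc a)] tone = Mstep N L m (Suc a) X"
    by (simp add: X_def)
  let ?I' = "sw a I"
  have I': "?I' \<in> idxs N m" using sw_idxs[OF I am] .
  define z :: 'a where "z = of_int (sgn (int (I!Suc a) - int (I!a)))"
  have t1: "tmul N m (emb2 m (Suc a) (Suc a + 1) Tcal) X I J = z * X ?I' J"
  proof -
    have "tmul N m (emb2 m (Suc a) (Suc a + 1) Tcal) X I J = Tcal (I!(Suc a - 1)) (I!Suc a) (I!Suc a) (I!(Suc a - 1)) * X (sw (Suc a - 1) I) J"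
      by (rule emb2_left[OF I _ am]) (auto intro: Tcal_swap0)
    thus ?thesis by (simp add: Tcal_def z_def)
  qed
  have t2: "tmul N m (tmul N m (emb2 m (Suc a) (Suc a + 1) Pop) X) (emb1 m (Suc a) L) I J
      = (\<Sum>x<N. X ?I' (J[a:=x]) * L x (J!a))"
  proof -
    have "tmul N m (tmul N m (emb2 m (Suc a) (Suc a + 1) Pop) X) (emb1 m (Suc a) L) I J
        = (\<Sum>x<N. tmul N m (emb2 m (Suc a) (Suc a + 1) Pop) X I (J[a:=x]) * L x (J!a))"
      using emb1_right[OF J, where a="Suc a"] am by simp
    also have "\<dots> = (\<Sum>x<N. X ?I' (J[a:=x]) * L x (J!a))"
    proof (intro sum.cong refl)
      fix x
      have "tmul N m (emb2 m (Suc a) (Suc a + 1) Pop) X I (J[a:=x]) = Pop (I!(Suc a - 1)) (I!Suc a) (I!Suc a) (I!(Suc a - 1)) * X (sw (Suc a - 1) I) (J[a:=x])"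
        by (rule emb2_left[OF I _ am]) (auto intro: Pop_swap0)
      thus "tmul N m (emb2 m (Suc a) (Suc a + 1) Pop) X I (J[a:=x]) * L x (J!a) = X ?I' (J[a:=x]) * L x (J!a)"
        by (simp add: Pop_def)
    qed
    finally show ?thesis .
  qed
  have s1: "?I' ! a = I ! Suc a" using lI am by (simp add: sw_def nth_list_update)
  have s2: "?I' ! b = I ! b" if "b < a" for b using that by (simp add: sw_def nth_list_update)
  have sK: "Kof ?I' a b = Kof I (Suc a) b" if "b \<le> a" for b
    using that s1 s2 by (auto simp: Kof_def)
  have sd: "drop (Suc a) ?I' = I ! a # drop (Suc (Suc a)) I"
  proof -
    have "drop (Suc a) ?I' = ?I' ! Suc a # drop (Suc (Suc a)) ?I'"
      by (rule Cons_nth_drop_Suc[symmetric]) (use lI am in \<open>simp add: sw_def\<close>)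
    moreover have "?I' ! Suc a = I ! a" using lI am by (simp add: sw_def nth_list_update)
    moreover have "drop (Suc (Suc a)) ?I' = drop (Suc (Suc a)) I" by (simp add: sw_def)
    ultimately show ?thesis by simp
  qed
  have jd: "drop (Suc a) J = J ! Suc a # drop (Suc (Suc a)) J"
    by (rule Cons_nth_drop_Suc[symmetric]) (use lJ am in simp)
  define C where "C \<longleftrightarrow> drop (Suc (Suc a)) I = drop (Suc (Suc a)) J \<and> J ! Suc a = I ! a"
  define \<kappa> where "\<kappa> = Kof I (Suc a) a"
  define P where "P = prod_list (map (psi L I (Suc a) J) [0..<a])"
  have \<kappa>N: "\<kappa> < N" unfolding \<kappa>_def Kof_def using idxs_nth[OF I] am by auto
  have psiI': "psi L ?I' a J' b = psi L I (Suc a) J b" if "b < a" "J' ! b = J ! b" for b J'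
    using that sK[of b] s1 s2[of b] by (simp add: psi_def)
  have X1: "X ?I' J = (if C \<and> J!a = \<kappa> then P else 0)"
  proof -
    have me: "map (psi L ?I' a J) [0..<a] = map (psi L I (Suc a) J) [0..<a]"
      using psiI' by auto
    show ?thesis using IH[OF I' J] sd jd sK[of a]
      by (simp add: Xf_def C_def \<kappa>_def P_def me)
  qed
  have X2: "X ?I' (J[a:=x]) = (if C \<and> x = \<kappa> then P else 0)" if "x < N" for x
  proof -
    have J2: "J[a:=x] \<in> idxs N m" using idxs_upd[OF J that] .
    have me: "map (psi L ?I' a (J[a:=x])) [0..<a] = map (psi L I (Suc a) J) [0..<a]"
      using psiI' by auto
    have d2: "drop (Suc a) (J[a:=x]) = drop (Suc a) J" by simp
    have n2: "J[a:=x] ! a = x" using lJ am by simp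
    have "X ?I' (J[a:=x]) = (if drop (Suc a) ?I' = drop (Suc a) (J[a:=x]) \<and> J[a:=x]!a = Kof ?I' a a then prod_list (map (psi L ?I' a (J[a:=x])) [0..<a]) else 0)"
      using IH[OF I' J2] by (simp only: Xf_def)
    also have "\<dots> = (if C \<and> x = \<kappa> then P else 0)"
      unfolding me d2 n2 sd jd sK[OF le_refl] P_def[symmetric] \<kappa>_def[symmetric] C_def by auto
    finally show ?thesis .
  qed
  have "Mstep N L m (Suc a) X I J = z * X ?I' J + (\<Sum>x<N. X ?I' (J[a:=x]) * L x (J!a))"
    unfolding Mstep_def tadd_def t1 t2 ..
  also have "(\<Sum>x<N. X ?I' (J[a:=x]) * L x (J!a)) = (\<Sum>x<N. if x = \<kappa> then (if C then P * L \<kappa> (J!a) else 0) else 0)"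
    using X2 by (intro sum.cong refl) auto
  also have "\<dots> = (if C then P * L \<kappa> (J!a) else 0)" using \<kappa>N by simp
  also have "z * X ?I' J + (if C then P * L \<kappa> (J!a) else 0) = Xf L I J (Suc a)"
  proof -
    have ps: "psi L I (Suc a) J a = L \<kappa> (J!a) + (if \<kappa> = J!a then z else 0)"
      by (simp add: psi_def \<kappa>_def z_def)
    have pr: "prod_list (map (psi L I (Suc a) J) [0..<Suc a]) = P * psi L I (Suc a) J a"
      by (simp add: P_def)
    have xf: "Xf L I J (Suc a) = (if C then P * psi L I (Suc a) J a else 0)"
      unfolding Xf_def pr using jd by (simp add: C_def Kof_def)
    show ?thesis unfolding xf ps X1
      by (auto simp: distrib_left z_def mult_of_int_commute)
  qed
  finally show ?case unfolding f .
qed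




lemma Mbar_walk:
  assumes m: "1 \<le> m" and I: "I \<in> idxs N m"
  shows "Mbar N L m I I = walk (Mv L (last I)) (last I) I"
proof -
  define a where "a = m - 1"
  have ma: "m = Suc a" using m by (simp add: a_def)
  have lI: "length I = m" using I by (simp add: idxs_def)
  have ne: "I \<noteq> []" using lI m by auto
  define v where "v = last I"
  have v: "I ! a = v" using lI ne by (simp add: v_def last_conv_nth a_def)
  define \<kappa> where "\<kappa> = Kof I a a"
  have \<kappa>N: "\<kappa> < N" unfolding \<kappa>_def Kof_def using idxs_nth[OF I] ma by auto
  have psi_eq: "psi L I a (I[a:=x]) b = psi L I a I b" if "b < a" for b x
    using that by (simp add: psi_def)
  have "Mbar N L m I I = (\<Sum>x<N. fold (Mstep N L m) [1..<m] tone I (I[m-1:=x]) * L x (I!(m-1)))"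
    unfolding Mbar_def by (rule emb1_right[OF I]) (use m in auto)
  also have "\<dots> = (\<Sum>x<N. Xf L I (I[a:=x]) a * L x (I!a))"
  proof (rule sum.cong[OF refl])
    fix x assume x: "x \<in> {..<N}"
    have u: "[1..<m] = [1..<Suc a]" using ma by simp
    have ma1: "m - 1 = a" using ma by simp
    have "fold (Mstep N L m) [1..<m] tone I (I[m-1:=x]) = Xf L I (I[a:=x]) a"
      unfolding u ma1 by (rule Xstep[OF _ I idxs_upd[OF I]]) (use ma x in auto)
    thus "fold (Mstep N L m) [1..<m] tone I (I[m-1:=x]) * L x (I!(m-1)) = Xf L I (I[a:=x]) a * L x (I!a)"
      by (simp add: a_def)
  qed
  also have "\<dots> = (\<Sum>x<N. if x = \<kappa> then prod_list (map (psi L I a I) [0..<a]) * L \<kappa> (I!a) else 0)"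
  proof (intro sum.cong refl)
    fix x
    have d: "drop (Suc a) I = drop (Suc a) (I[a:=x])" using lI ma by simp
    have n: "I[a:=x] ! a = x" using lI ma by simp
    have me: "map (psi L I a (I[a:=x])) [0..<a] = map (psi L I a I) [0..<a]"
      using psi_eq by auto
    show "Xf L I (I[a:=x]) a * L x (I!a) = (if x = \<kappa> then prod_list (map (psi L I a I) [0..<a]) * L \<kappa> (I!a) else 0)"
      unfolding Xf_def d n me \<kappa>_def by auto
  qed
  also have "\<dots> = prod_list (map (psi L I a I) [0..<a]) * L \<kappa> (I!a)" using \<kappa>N by simp
  also have "\<dots> = walk (Mv L v) v I"
  proof -
    have k: "(v # I) ! b = Kof I a b" if "b \<le> a" for b
      using that v by (cases b) (auto simp: Kof_def)
    have "walk (Mv L v) v I = prod_list (map (\<lambda>b. Mv L v ((v#I)!b) (I!b)) [0..<a]) * Mv L v ((v#I)!a) (I!a)"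
      unfolding walk_nth lI ma by simp
    also have "map (\<lambda>b. Mv L v ((v#I)!b) (I!b)) [0..<a] = map (psi L I a I) [0..<a]"
      using k v by (auto simp: Mv_def psi_def)
    also have "Mv L v ((v#I)!a) (I!a) = L \<kappa> (I!a)"
      using k[of a] v by (simp add: Mv_def \<kappa>_def)
    finally show ?thesis by simp
  qed
  finally show ?thesis by (simp add: v_def)
qed

lemma rhs_walk:
  assumes m: "1 \<le> m"
  shows "ttr N m (Mbar N L m) = (\<Sum>v<N. col N (Mv L v) v m v)"
proof -
  have "ttr N m (Mbar N L m) = (\<Sum>I\<in>idxs N m. walk (Mv L (last I)) (last I) I)"
    unfolding ttr_def using Mbar_walk[OF m] by (intro sum.cong refl) auto
  also have "\<dots> = (\<Sum>v<N. col N (Mv L v) v m v)" by (rule closed_walks[OF m])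
  finally show ?thesis .
qed

theorem mainTheorem6:
  fixes L :: "nat \<Rightarrow> nat \<Rightarrow> 'a::ring_1" and N m :: nat
  assumes "1 \<le> N" and "1 \<le> m"
  shows "theta N L m = ttr N m (Mbar N L m)"
proof -
  have "theta N L m = (\<Sum>s = 1..m. fps_nth (fps_X ^ s * theta_term N L s) m)"
    unfolding theta_def by (rule fps_sum_nth)
  also have "\<dots> = (\<Sum>s = 1..m. fps_nth (theta_term N L s) (m - s))"
    by (intro sum.cong refl) (simp add: fps_X_power_mult_nth)
  also have "\<dots> = (\<Sum>s = 1..m. \<Sum>v<N. fps_nth (col N (FL L v) v s v) (m - s))"
    by (intro sum.cong refl) (simp add: theta_term_walk fps_sum_nth)
  also have "\<dots> = (\<Sum>v<N. \<Sum>s = 1..m. fps_nth (col N (FL L v) v s v) (m - s))"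
    by (rule sum.swap)
  also have "\<dots> = (\<Sum>v<N. \<Sum>s\<le>m. fps_nth (col N (FL L v) v s v) (m - s))"
  proof (rule sum.cong[OF refl])
    fix v
    have "(\<Sum>s\<le>m. fps_nth (col N (FL L v) v s v) (m - s))
        = fps_nth (col N (FL L v) v 0 v) (m - 0) + (\<Sum>s = Suc 0..m. fps_nth (col N (FL L v) v s v) (m - s))"
      unfolding atMost_atLeast0 by (rule sum.atLeast_Suc_atMost) simp
    moreover have "fps_nth (col N (FL L v) v 0 v) (m - 0) = 0" using assms(2) by simp
    ultimately show "(\<Sum>s = 1..m. fps_nth (col N (FL L v) v s v) (m - s)) = (\<Sum>s\<le>m. fps_nth (col N (FL L v) v s v) (m - s))"
      by simp
  qed
  also have "\<dots> = (\<Sum>v<N. col N (Mv L v) v m v)"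
    by (intro sum.cong refl) (simp add: col_compare)
  also have "\<dots> = ttr N m (Mbar N L m)" by (rule rhs_walk[OF assms(2), symmetric])
  finally show ?thesis .
qed



end
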